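(* Let $\Omega=e^{\frac{\sqrt{-1}}{2\pi}N\log\frac1z}A(z)$ on the punctured disc, with $N$ nilpotent, $N^{n+1}=0$, and $A(z)=A_0+A_1z+\cdots$ an $H$-valued power series with radius of convergence $\delta>0$. Expanding, write $\Omega=\sum_{k,l}A_{k,l}z^k(\log\frac1z)^l=\sum_{k,l}A_{k,l}f_{k,l}$ with $f_{k,l}=z^k(\log\frac1z)^l$ ($k\ge0$, $0\le l\le n$), and set $\deg f_{k,l}=k-\frac{l}{n+1}$. Then this series converges in the $C^\infty$ sense (near $0$). Moreover, for every real $\mu$ and integer $s\ge0$, \[\Big\|\Omega-\sum_{\deg f_{k,l}\le\mu}A_{k,l}f_{k,l}\Big\|_{C^s}\le C\,r^{k_0-s}\Big(\log\frac1r\Big)^{l_0},\qquad r=|z|,\] for $|z|$ sufficiently small, where $(k_0,l_0)$ is the unique pair of nonnegative integers with $l_0\le n$, $k_0-\frac{l_0}{n+1}>\mu$, and $k'-\frac{l'}{n+1}\ge k_0-\frac{l_0}{n+1}$ for all integers $k',l'$ with $k'-\frac{l'}{n+1}>\mu$; and $C$ is a constant depending only on $k_0,l_0,\mu$ and $\Omega$.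
   Context: This arises from a one-parameter family of polarized Calabi–Yau $n$-folds over the punctured disc $\Delta^*$ (coordinate $z$): by Schmid's nilpotent orbit theorem (after a base change) a nonzero holomorphic section $\Omega$ of the Hodge bundle $F^n$, valued in a fixed complex vector space $H$ (the primitive middle cohomology), has the stated form, $N$ being the nilpotent logarithm of the monodromy. $C^s$ norms are taken with respect to $z$ on a small punctured disc. *)

theory Defs
  imports "HOL-Analysis.Analysis"
begin

text \<open>The space H is modelled as complex^'d ('d a finite index type);
 linear operators on H as complex matrices complex^'d^'d.\<close>

definition mpow :: "complex^'d^'d \<Rightarrow> nat \<Rightarrow> complex^'d^'d" where
  "mpow M j = (((**) M) ^^ j) (mat 1)"

definition mexp :: "complex^'d^'d \<Rightarrow> complex^'d^'d" where
  "mexp M = (\<Sum>j. inverse (fact j) *\<^sub>R mpow M j)"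

definition Aser :: "(nat \<Rightarrow> complex^'d) \<Rightarrow> complex \<Rightarrow> complex^'d" where
  "Aser a z = (\<Sum>j. (z ^ j) *s a j)"

definition Omega :: "complex^'d^'d \<Rightarrow> (nat \<Rightarrow> complex^'d) \<Rightarrow> complex \<Rightarrow> complex^'d" where
  "Omega N a z = mexp (mat (\<i> / (2 * complex_of_real pi) * Ln (inverse z)) ** N) *v Aser a z"

definition fkl :: "nat \<Rightarrow> nat \<Rightarrow> complex \<Rightarrow> complex" where
  "fkl k l z = z ^ k * (Ln (inverse z)) ^ l"

text \<open>Coefficients A_{k,l} of the expansion Omega = sum A_{k,l} f_{k,l}:
  A_{k,l} = (i/(2pi))^l / l! * N^l A_k.\<close>
definition Akl :: "complex^'d^'d \<Rightarrow> (nat \<Rightarrow> complex^'d) \<Rightarrow> nat \<Rightarrow> nat \<Rightarrow> complex^'d" where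
  "Akl N a k l = ((\<i> / (2 * complex_of_real pi)) ^ l / of_nat (fact l)) *s (mpow N l *v a k)"

definition degf :: "nat \<Rightarrow> nat \<Rightarrow> nat \<Rightarrow> real" where
  "degf n k l = real k - real l / real (n + 1)"

definition vderiv :: "(complex \<Rightarrow> complex^'d) \<Rightarrow> complex \<Rightarrow> complex^'d" where
  "vderiv F z = (\<chi> i. deriv (\<lambda>w. F w $ i) z)"

text \<open>Pointwise C^s norm at z (for functions holomorphic near z):
  sum of norms of the complex derivatives of order 0..s.\<close>
definition Cs_norm :: "nat \<Rightarrow> (complex \<Rightarrow> complex^'d) \<Rightarrow> complex \<Rightarrow> real" where
  "Cs_norm s F z = (\<Sum>j\<le>s. norm ((vderiv ^^ j) F z))"

text \<open>Slit punctured disc of radius rho (domain of the principal branch).\<close>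
definition sdisc :: "real \<Rightarrow> complex set" where
  "sdisc \<rho> = {z. 0 < cmod z \<and> cmod z < \<rho> \<and> z \<notin> \<real>\<^sub>\<le>\<^sub>0}"

end

theory Submission imports Defs "HOL-Complex_Analysis.Complex_Analysis" "HOL-Real_Asymp.Real_Asymp"
begin

no_notation fps_nth (infixl \<open>$\<close> 75)

lemma vderiv_pow_nth: "(vderiv ^^ j) F z $ i = (deriv ^^ j) (\<lambda>w. F w $ i) z"
proof (induction j arbitrary: z)
  case 0 then show ?case by simp
next
  case (Suc j)
  have e: "(\<lambda>w. (vderiv ^^ j) F w $ i) = (deriv ^^ j) (\<lambda>w. F w $ i)"
    using Suc.IH by auto
  have "(vderiv ^^ Suc j) F z $ i = deriv (\<lambda>w. (vderiv ^^ j) F w $ i) z"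
    unfolding funpow.simps comp_def vderiv_def[of "(vderiv ^^ j) F"] by simp
  then show ?case by (simp add: e)
qed

lemma mpow_Suc: "mpow M (Suc j) = M ** mpow M j"
  by (simp add: mpow_def)

lemma mpow_0: "mpow M 0 = mat 1"
  by (simp add: mpow_def)

lemma if_mult0: "(if c then x else 0) * (y::'a::semiring_0) = (if c then x * y else 0)"
  "y * (if c then x else 0) = (if c then y * x else 0)" by auto

lemma mat_mult_left: "(mat x ** P) = (\<chi> i j. x * P$i$j)"
  by (simp add: matrix_matrix_mult_def mat_def vec_eq_iff if_mult0)

lemma mat_mult_right: "(P ** mat (x::complex)) = (\<chi> i j. x * P$i$j)"
  by (simp add: matrix_matrix_mult_def mat_def vec_eq_iff if_mult0 mult.commute)

lemma mat_comm: "P ** mat (x::complex) = mat x ** P"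
  by (simp add: mat_mult_left mat_mult_right)

lemma mat_mat: "mat x ** mat y = mat (x * y)"
  by (simp add: mat_mult_left vec_eq_iff) (simp add: mat_def)

lemma mpow_zero: assumes "mpow N (n+1) = 0" "j \<ge> n+1" shows "mpow N j = 0"
  using assms(2)
proof (induction j)
  case 0 then show ?case by simp
next
  case (Suc j)
  show ?case
  proof (cases "j \<ge> n+1")
    case True then show ?thesis using Suc by (simp add: mpow_Suc)
  next
    case False then have "Suc j = n+1" using Suc by simp
    then show ?thesis using assms(1) by simp
  qed
qed

lemma mpow_scal: "mpow (mat x ** N) j = mat (x^j) ** mpow N j"
proof (induction j)
  case 0 then show ?case by (simp add: mpow_0)
next
  case (Suc j)
  have "mpow (mat x ** N) (Suc j) = (mat x ** N) ** (mat (x^j) ** mpow N j)"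
    by (simp add: mpow_Suc Suc.IH)
  also have "\<dots> = mat (x^Suc j) ** mpow N (Suc j)"
  proof -
    have "(mat x ** N) ** (mat (x^j) ** mpow N j) = mat x ** ((N ** mat (x^j)) ** mpow N j)"
      by (simp add: matrix_mul_assoc)
    also have "\<dots> = mat x ** ((mat (x^j) ** N) ** mpow N j)" by (simp only: mat_comm)
    also have "\<dots> = (mat x ** mat (x^j)) ** (N ** mpow N j)" by (simp add: matrix_mul_assoc)
    also have "\<dots> = mat (x^Suc j) ** mpow N (Suc j)" by (simp add: mat_mat mpow_Suc)
    finally show ?thesis .
  qed
  finally show ?case .
qed


lemma norm_smult_cvec: "norm (c *s (x::complex^'d)) = cmod c * norm x"
  by (simp add: norm_vec_def L2_set_right_distrib norm_mult)

lemma mexp_finite: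
  assumes "mpow N (n+1) = 0"
  shows "mexp (mat y ** N) = (\<Sum>j\<le>n. inverse (fact j) *\<^sub>R (mat (y^j) ** mpow N j))"
  unfolding mexp_def
  by (subst suminf_finite[where N="{..n}"]) (auto simp: mpow_scal mpow_zero[OF assms])

lemma Aser_summable:
  fixes a :: "nat \<Rightarrow> complex^'d" and u :: complex
  assumes "summable (\<lambda>k. norm (a k) * t^k)" "norm u \<le> t"
  shows "summable (\<lambda>k. u^k *s a k)"
proof (rule summable_norm_cancel, rule summable_comparison_test[OF _ assms(1)])
  have "norm (norm (u ^ k *s a k)) \<le> norm (a k) * t ^ k" for k
  proof -
    have "norm (norm (u ^ k *s a k)) = cmod u ^ k * norm (a k)"
      by (simp add: norm_smult_cvec norm_power)
    also have "\<dots> \<le> t ^ k * norm (a k)"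
      by (intro mult_right_mono power_mono assms(2)) auto
    finally show ?thesis by (simp add: mult.commute)
  qed
  then show "\<exists>N. \<forall>k\<ge>N. norm (norm (u ^ k *s a k)) \<le> norm (a k) * t ^ k" by blast
qed

lemma Aser_nth:
  fixes a :: "nat \<Rightarrow> complex^'d" and u :: complex
  assumes "summable (\<lambda>k. norm (a k) * t^k)" "norm u \<le> t"
  shows "Aser a u $ m = (\<Sum>k. u^k * a k $ m)"
  using sums_vec_nth[OF summable_sums[OF Aser_summable[OF assms]], of m]
  by (simp add: Aser_def sums_iff)

lemma coef_summable:
  fixes a :: "nat \<Rightarrow> complex^'d" and u :: complex
  assumes "summable (\<lambda>k. norm (a k) * t^k)" "norm u \<le> t"
  shows "summable (\<lambda>k. u^k * a k $ m)"
  using summable_vec_nth[OF Aser_summable[OF assms], of m] by simp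

lemma matvec_nth: "((M::complex^'d^'d) *v v) $ i = (\<Sum>k\<in>UNIV. M$i$k * v$k)"
  by (simp add: matrix_vector_mult_def)

lemma matvec_Aser:
  fixes a :: "nat \<Rightarrow> complex^'d" and u :: complex
  assumes "summable (\<lambda>k. norm (a k) * t^k)" "norm u \<le> t"
  shows "((M::complex^'d^'d) *v Aser a u) $ i = (\<Sum>k. u^k * (M *v a k) $ i)"
proof -
  have "((M::complex^'d^'d) *v Aser a u) $ i = (\<Sum>m\<in>UNIV. M$i$m * (\<Sum>k. u^k * a k $ m))"
    by (simp add: matvec_nth Aser_nth[OF assms])
  also have "\<dots> = (\<Sum>m\<in>UNIV. (\<Sum>k. M$i$m * (u^k * a k $ m)))"
    by (intro sum.cong refl suminf_mult[symmetric] coef_summable[OF assms])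
  also have "\<dots> = (\<Sum>k. \<Sum>m\<in>UNIV. M$i$m * (u^k * a k $ m))"
    by (intro suminf_sum[symmetric] summable_mult coef_summable[OF assms])
  also have "\<dots> = (\<Sum>k. u^k * (M *v a k) $ i)"
    by (simp add: matvec_nth sum_distrib_left mult_ac)
  finally show ?thesis .
qed

lemma mat_scaleR_nth: "((r *\<^sub>R (mat y ** (P::complex^'d^'d))) *v v) $ i = of_real r * y * (P *v v) $ i"
proof -
  have "((r *\<^sub>R (mat y ** P)) *v v) $ i = (\<Sum>k\<in>UNIV. (of_real r * (y * P$i$k)) * v$k)"
    unfolding matvec_nth mat_mult_left vector_scaleR_component vec_lambda_beta by (simp add: scaleR_conv_of_real)
  also have "\<dots> = of_real r * y * (P *v v) $ i"
    unfolding matvec_nth sum_distrib_left by (simp add: mult_ac)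
  finally show ?thesis .
qed

lemma sum_mat_nth: "((\<Sum>j\<in>J. (M j::complex^'d^'d)) *v v) $ i = (\<Sum>j\<in>J. (M j *v v) $ i)"
  by (simp add: matvec_nth sum_distrib_right sum_component) (rule sum.swap)

lemma Omega_comp:
  assumes nil: "mpow N (n+1) = 0" and sa: "summable (\<lambda>k. norm (a k) * t^k)" and u: "norm u \<le> t"
  shows "(mexp (mat (\<i> / (2 * complex_of_real pi) * x) ** N) *v Aser a u) $ i
         = (\<Sum>l\<le>n. x^l * (\<Sum>k. Akl N a k l $ i * u^k))"
proof -
  let ?c = "\<i> / (2 * complex_of_real pi)"
  have "(mexp (mat (?c * x) ** N) *v Aser a u) $ i
       = (\<Sum>l\<le>n. of_real (inverse (fact l)) * (?c * x)^l * (mpow N l *v Aser a u) $ i)"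
    by (simp add: mexp_finite[OF nil] sum_mat_nth mat_scaleR_nth)
  also have "\<dots> = (\<Sum>l\<le>n. x^l * (\<Sum>k. Akl N a k l $ i * u^k))"
  proof (intro sum.cong refl)
    fix l
    have "of_real (inverse (fact l)) * (?c * x)^l * (mpow N l *v Aser a u) $ i
        = x^l * (of_real (inverse (fact l)) * ?c^l * (\<Sum>k. u^k * (mpow N l *v a k) $ i))"
    proof -
      have pw: "(?c*x)^l = x^l * ?c^l" by (metis mult.commute power_mult_distrib)
      show ?thesis unfolding pw matvec_Aser[OF sa u] by (simp add: mult_ac)
    qed
    also have "\<dots> = x^l * (\<Sum>k. Akl N a k l $ i * u^k)"
    proof -
      have sm: "summable (\<lambda>k. u^k * (mpow N l *v a k) $ i)"
      proof -
        have "summable (\<lambda>k. \<Sum>m\<in>UNIV. mpow N l $ i $ m * (u^k * a k $ m))"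
          by (intro summable_sum summable_mult coef_summable[OF sa u])
        then show ?thesis by (simp add: matvec_nth sum_distrib_left mult_ac)
      qed
      have e: "Akl N a k l $ i * u^k = (of_real (inverse (fact l)) * ?c^l) * (u^k * (mpow N l *v a k)$i)" for k
      proof -
        have f: "(of_nat (fact l) :: complex) = of_real (fact l)" by simp
        show ?thesis unfolding Akl_def vector_smult_component f of_real_inverse divide_inverse
          by (simp only: mult_ac)
      qed
      show ?thesis
        unfolding e suminf_mult[OF sm] by (simp only: mult_ac)
    qed
    finally show "of_real (inverse (fact l)) * (?c * x)^l * (mpow N l *v Aser a u) $ i
        = x^l * (\<Sum>k. Akl N a k l $ i * u^k)" .
  qed
  finally show ?thesis .
qed


definition ps :: "(nat \<Rightarrow> complex) \<Rightarrow> complex \<Rightarrow> complex" where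
  "ps b w = (\<Sum>k. b k * w^k)"

definition tl_ps :: "(nat \<Rightarrow> complex) \<Rightarrow> nat \<Rightarrow> complex \<Rightarrow> complex" where
  "tl_ps b K w = ps b w - (\<Sum>k<K. b k * w^k)"

definition tau :: "(nat \<Rightarrow> complex) \<Rightarrow> real \<Rightarrow> nat \<Rightarrow> real" where
  "tau b t K = (\<Sum>k. norm (b (k+K)) * t^(k+K))"

lemma ps_summable_norm:
  fixes b :: "nat \<Rightarrow> complex" and w :: complex
  assumes "summable (\<lambda>k. norm (b k) * t^k)" "norm w \<le> t"
  shows "summable (\<lambda>k. norm (b k * w^k))"
proof (rule summable_comparison_test[OF _ assms(1)])
  have "norm (norm (b k * w^k)) \<le> norm (b k) * t ^ k" for k
    using assms(2) by (auto simp: norm_mult norm_power intro!: mult_left_mono power_mono)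
  then show "\<exists>N. \<forall>k\<ge>N. norm (norm (b k * w^k)) \<le> norm (b k) * t ^ k" by blast
qed

lemma ps_summable:
  fixes b :: "nat \<Rightarrow> complex" and w :: complex
  assumes "summable (\<lambda>k. norm (b k) * t^k)" "norm w \<le> t"
  shows "summable (\<lambda>k. b k * w^k)"
  using summable_norm_cancel[OF ps_summable_norm[OF assms]] .

lemma ps_holo:
  assumes "summable (\<lambda>k. norm (b k) * t^k)" "0 \<le> t"
  shows "ps b holomorphic_on ball 0 t"
proof -
  have "DERIV (ps b) w :> (\<Sum>n. diffs b n * w^n)" if "w \<in> ball 0 t" for w
    unfolding ps_def
  proof (rule termdiffs_strong)
    show "summable (\<lambda>n. b n * (complex_of_real t) ^ n)"
      using assms by (intro ps_summable[OF assms(1)]) auto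
    show "norm w < norm (complex_of_real t)" using that assms by auto
  qed
  then show ?thesis by (subst holomorphic_on_open) blast+
qed

lemma tl_ps_holo:
  assumes "summable (\<lambda>k. norm (b k) * t^k)" "0 \<le> t"
  shows "tl_ps b K holomorphic_on ball 0 t"
  unfolding tl_ps_def by (intro holomorphic_intros ps_holo[OF assms])

lemma tl_ps_eq:
  fixes b :: "nat \<Rightarrow> complex" and w :: complex
  assumes "summable (\<lambda>k. norm (b k) * t^k)" "norm w \<le> t"
  shows "tl_ps b K w = (\<Sum>k. b (k+K) * w^(k+K))"
proof -
  have "(\<lambda>k. b k * w^k) sums ps b w"
    using ps_summable[OF assms] by (simp add: ps_def summable_sums)
  then have "(\<lambda>k. b (k+K) * w^(k+K)) sums (ps b w - (\<Sum>k<K. b k * w^k))"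
    by (subst sums_iff_shift) simp
  then show ?thesis by (simp add: tl_ps_def sums_iff)
qed

lemma tau_summable:
  assumes "summable (\<lambda>k. norm (b k) * t^k)"
  shows "summable (\<lambda>k. norm (b (k+K)) * t^(k+K))"
  using assms by (subst summable_iff_shift[where k=K]) 

lemma tl_ps_bound:
  fixes b :: "nat \<Rightarrow> complex" and w :: complex
  assumes sb: "summable (\<lambda>k. norm (b k) * t^k)" and w: "norm w \<le> t" and t: "0 < t"
  shows "norm (tl_ps b K w) \<le> (norm w / t)^K * tau b t K"
proof -
  have s1: "summable (\<lambda>k. norm (b (k+K) * w^(k+K)))"
    using ps_summable_norm[OF sb w] by (subst summable_iff_shift[where k=K]) 
  have "norm (tl_ps b K w) \<le> (\<Sum>k. norm (b (k+K) * w^(k+K)))"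
    unfolding tl_ps_eq[OF sb w] by (rule summable_norm[OF s1])
  also have "\<dots> \<le> (\<Sum>k. (norm w / t)^K * (norm (b (k+K)) * t^(k+K)))"
  proof (rule suminf_le[OF _ s1])
    show "summable (\<lambda>k. (norm w / t)^K * (norm (b (k+K)) * t^(k+K)))"
      by (intro summable_mult tau_summable[OF sb])
    fix k
    have "norm w ^ (k+K) = norm w ^ K * norm w ^ k" by (simp add: power_add)
    also have "\<dots> \<le> norm w ^ K * t^k" by (intro mult_left_mono power_mono w) auto
    also have "\<dots> = (norm w / t)^K * t^(k+K)" using t by (simp add: power_add power_divide)
    finally have "norm w ^ (k+K) \<le> (norm w / t)^K * t^(k+K)" .
    then show "norm (b (k+K) * w^(k+K)) \<le> (norm w / t)^K * (norm (b (k+K)) * t^(k+K))"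
      by (simp add: norm_mult norm_power mult_left_mono mult.left_commute)
  qed
  also have "\<dots> = (norm w / t)^K * tau b t K"
    unfolding tau_def by (intro suminf_mult tau_summable[OF sb])
  finally show ?thesis .
qed

lemma tau_nonneg: "summable (\<lambda>k. norm (b k) * t^k) \<Longrightarrow> 0 \<le> t \<Longrightarrow> 0 \<le> tau b t K"
  unfolding tau_def by (intro suminf_nonneg tau_summable) auto

lemma tau_lim:
  assumes sb: "summable (\<lambda>k. norm (b k) * t^k)"
  shows "(\<lambda>K. tau b t K) \<longlonglongrightarrow> 0"
proof -
  let ?f = "\<lambda>k. norm (b k) * t^k"
  have "tau b t K = suminf ?f - (\<Sum>k<K. ?f k)" for K
  proof -
    have "(\<lambda>k. ?f (k+K)) sums (suminf ?f - (\<Sum>k<K. ?f k))"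
      using summable_sums[OF sb] by (subst sums_iff_shift) simp
    then show ?thesis by (simp add: tau_def sums_iff)
  qed
  moreover have "(\<lambda>K. suminf ?f - (\<Sum>k<K. ?f k)) \<longlonglongrightarrow> suminf ?f - suminf ?f"
    by (intro tendsto_intros summable_LIMSEQ sb)
  ultimately show ?thesis by simp
qed


lemma local_log_eq:
  assumes z0: "z0 \<notin> \<real>\<^sub>\<le>\<^sub>0"
  shows "eventually (\<lambda>w. w \<notin> \<real>\<^sub>\<le>\<^sub>0 \<and> Ln (inverse w) = - (Ln z0 + Ln (w / z0))) (nhds z0)"
proof -
  have z0nz: "z0 \<noteq> 0" using z0 by auto
  define e where "e = pi - \<bar>Im (Ln z0)\<bar>"
  have e: "0 < e" using Im_Ln_less_pi[OF z0] mpi_less_Im_Ln[of z0] z0nz by (auto simp: e_def)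
  have c: "isCont (\<lambda>w. Ln (w / z0)) z0"
    using z0nz by (intro continuous_intros) auto
  then have "((\<lambda>w. Ln (w / z0)) \<longlongrightarrow> 0) (at z0)"
    using z0nz by (simp add: isCont_def)
  then have ev1: "eventually (\<lambda>w. norm (Ln (w / z0)) < e) (at z0)"
    using e by (auto dest: tendstoD simp: dist_norm)
  have ev1': "eventually (\<lambda>w. norm (Ln (w / z0)) < e) (nhds z0)"
    using ev1 e z0nz by (simp add: eventually_nhds_conv_at)
  have ev2: "eventually (\<lambda>w. w \<notin> \<real>\<^sub>\<le>\<^sub>0) (nhds z0)"
    using eventually_nhds_in_open[of "- \<real>\<^sub>\<le>\<^sub>0" z0] z0 by (auto simp: open_Compl)
  show ?thesis
    using ev1' ev2
  proof eventually_elim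
    case (elim w)
    have wnz: "w \<noteq> 0" using elim by auto
    have "\<bar>Im (Ln (w / z0))\<bar> < e" using elim(1) abs_Im_le_cmod[of "Ln (w/z0)"] by linarith
    then have "Ln (z0 * (w / z0)) = Ln z0 + Ln (w / z0)"
      using wnz z0nz by (intro Ln_times_simple) (auto simp: e_def)
    then have "Ln w = Ln z0 + Ln (w / z0)" using z0nz by simp
    then show ?case using elim(2) Ln_inverse[OF elim(2)] by simp
  qed
qed


lemma norm_local_log:
  assumes z0: "z0 \<notin> \<real>\<^sub>\<le>\<^sub>0" "norm z0 < 1" and w: "w \<in> cball z0 (norm z0 / 4)"
  shows "norm (- (Ln z0 + Ln (w / z0))) \<le> ln (1 / norm z0) + 5"
proof -
  have z0nz: "z0 \<noteq> 0" using z0 by auto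
  have r: "0 < norm z0" using z0nz by simp
  have "norm (Ln z0) \<le> \<bar>Re (Ln z0)\<bar> + \<bar>Im (Ln z0)\<bar>" by (rule cmod_le)
  also have "\<bar>Re (Ln z0)\<bar> = ln (1 / norm z0)"
    using z0nz z0(2) r by (simp add: ln_div)
  also have "\<bar>Im (Ln z0)\<bar> \<le> pi" using Im_Ln_le_pi[of z0] mpi_less_Im_Ln[of z0] z0nz by auto
  finally have a: "norm (Ln z0) \<le> ln (1 / norm z0) + pi" by simp
  have d: "norm (w / z0 - 1) \<le> 1/4"
  proof -
    have "norm (w / z0 - 1) = norm (w - z0) / norm z0"
      using z0nz by (simp add: norm_divide[symmetric] diff_divide_distrib)
    also have "\<dots> \<le> (norm z0 / 4) / norm z0"
      using w r by (intro divide_right_mono) (auto simp: dist_norm norm_minus_commute)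
    also have "\<dots> = 1/4" using r by simp
    finally show ?thesis .
  qed
  have "norm (Ln (1 + (w / z0 - 1))) \<le> 2 * norm (w / z0 - 1)"
    using d by (intro norm_Ln_le) auto
  then have b: "norm (Ln (w / z0)) \<le> 1/2" using d by simp
  have "norm (- (Ln z0 + Ln (w / z0))) \<le> norm (Ln z0) + norm (Ln (w / z0))"
    by (metis norm_minus_cancel norm_triangle_ineq)
  also have "\<dots> \<le> ln (1 / norm z0) + 5" using a b pi_less_4 by linarith
  finally show ?thesis .
qed

lemma local_dom:
  fixes z0 w :: complex
  assumes z0: "z0 \<noteq> 0" and w: "w \<in> cball z0 (norm z0 / 4)"
  shows "w / z0 \<notin> \<real>\<^sub>\<le>\<^sub>0" "norm w \<le> 5/4 * norm z0"
proof -
  have "norm (w / z0 - 1) = norm (w - z0) / norm z0"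
    using z0 by (simp add: norm_divide[symmetric] diff_divide_distrib)
  also have "\<dots> \<le> (norm z0 / 4) / norm z0"
    using w z0 by (intro divide_right_mono) (auto simp: dist_norm norm_minus_commute)
  also have "\<dots> = 1/4" using z0 by simp
  finally have d: "norm (w / z0 - 1) \<le> 1/4" .
  have "Re (1 - w / z0) \<le> 1/4" using d abs_Re_le_cmod[of "w / z0 - 1"] by auto
  then have "Re (w / z0) > 0" by simp
  then show "w / z0 \<notin> \<real>\<^sub>\<le>\<^sub>0" by (auto simp: complex_nonpos_Reals_iff)
  have "norm w \<le> norm z0 + norm (w - z0)" by (metis norm_triangle_sub add.commute)
  also have "norm (w - z0) \<le> norm z0 / 4" using w by (auto simp: dist_norm norm_minus_commute)
  finally show "norm w \<le> 5/4 * norm z0" by simp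
qed

lemma core:
  fixes h :: "nat \<Rightarrow> complex \<Rightarrow> complex" and F :: "complex \<Rightarrow> complex"
  assumes hol: "\<And>l. l \<le> n \<Longrightarrow> h l holomorphic_on ball 0 t"
    and z0: "z0 \<notin> \<real>\<^sub>\<le>\<^sub>0" "norm z0 < 1" "5/4 * norm z0 < t"
    and B: "\<And>l w. l \<le> n \<Longrightarrow> w \<in> cball z0 (norm z0/4) \<Longrightarrow> norm (h l w) \<le> B l"
    and S: "open S" "z0 \<in> S" "\<And>w. w \<in> S \<Longrightarrow> F w = (\<Sum>l\<le>n. Ln (inverse w)^l * h l w)"
  shows "norm ((deriv^^j) F z0) \<le> fact j * (4/norm z0)^j * (\<Sum>l\<le>n. (ln (1/norm z0) + 5)^l * B l)"
proof -
  define r where "r = norm z0"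
  have z0nz: "z0 \<noteq> 0" using z0 by auto
  have r: "0 < r" "r < 1" using z0nz z0 by (auto simp: r_def)
  define G where "G = (\<lambda>w. \<Sum>l\<le>n. (- (Ln z0 + Ln (w / z0)))^l * h l w)"
  define Bnd where "Bnd = (\<Sum>l\<le>n. (ln (1/r) + 5)^l * B l)"
  have ev: "eventually (\<lambda>w. F w = G w) (nhds z0)"
    using local_log_eq[OF z0(1)] eventually_nhds_in_open[OF S(1,2)]
    by eventually_elim (simp add: S(3) G_def)
  have sub: "cball z0 (r/4) \<subseteq> ball 0 t"
    using local_dom(2)[OF z0nz] z0(3) by (force simp: r_def)
  have holG: "G holomorphic_on cball z0 (r/4)"
    unfolding G_def using local_dom(1)[OF z0nz] hol sub
    by (intro holomorphic_intros) (auto simp: r_def intro: holomorphic_on_subset)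
  have Bpos: "0 \<le> B l" if "l \<le> n" for l
    using B[OF that, of z0] r by (auto simp: r_def) (meson norm_ge_zero order_trans)
  have bnd: "norm (G w) \<le> Bnd" if w: "w \<in> cball z0 (r/4)" for w
  proof -
    have "norm (G w) \<le> (\<Sum>l\<le>n. norm ((- (Ln z0 + Ln (w / z0)))^l * h l w))"
      unfolding G_def by (rule norm_sum)
    also have "\<dots> \<le> Bnd" unfolding Bnd_def norm_mult norm_power
    proof (intro sum_mono mult_mono power_mono)
      fix l assume "l \<in> {..n}"
      then show "norm (h l w) \<le> B l" using B w by (auto simp: r_def)
    qed (use norm_local_log[OF z0(1,2)] w r in \<open>auto simp: r_def\<close>)
    finally show ?thesis .
  qed
  have eq: "(deriv^^j) F z0 = (deriv^^j) G z0"
    by (rule higher_deriv_cong_ev[OF ev refl])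
  have main: "norm ((deriv^^j) G z0) \<le> fact j * (4/r)^j * Bnd"
  proof (cases "j = 0")
    case True
    then show ?thesis using bnd[of z0] r by simp
  next
    case False
    show ?thesis
    proof (rule field_le_epsilon)
      fix e :: real assume e: "0 < e"
      define e' where "e' = e / (fact j * (4/r)^j)"
      have e': "0 < e'" using e r by (simp add: e'_def)
      have "norm ((deriv^^j) G z0) \<le> fact j * (Bnd + e') / (r/4)^j"
      proof (rule Cauchy_higher_deriv_bound[where y=0])
        show "G holomorphic_on ball z0 (r/4)" using holG by (rule holomorphic_on_subset) auto
        show "continuous_on (cball z0 (r/4)) G" using holG by (rule holomorphic_on_imp_continuous_on)
        show "G w \<in> ball 0 (Bnd + e')" if "w \<in> ball z0 (r/4)" for w
          using bnd[of w] that e' by auto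
      qed (use r False in auto)
      also have "\<dots> = fact j * (4/r)^j * Bnd + e"
        using r by (simp add: e'_def field_simps power_divide)
      finally show "norm ((deriv^^j) G z0) \<le> fact j * (4/r)^j * Bnd + e" .
    qed
  qed
  show ?thesis using main eq by (simp add: r_def Bnd_def)
qed


lemma key_ineq:
  fixes r :: real
  assumes r: "0 < r" "r < 1" and L: "5 \<le> ln (1/r)" and sm: "r * (2 * ln (1/r))^n \<le> 1"
    and js: "j \<le> s" and ln: "l \<le> n" and l0n: "l0 \<le> n"
    and cs: "(K = k0 \<and> l \<le> l0) \<or> K \<ge> k0 + 1"
  shows "r powr (real K - real j) * (ln (1/r) + 5)^l \<le> 2^n * r powr (real k0 - real s) * ln (1/r)^l0"
proof -
  define L where "L = ln (1/r)"
  have L1: "1 \<le> L" using L by (simp add: L_def)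
  have a: "(L + 5)^l \<le> (2*L)^l" using L by (intro power_mono) (auto simp: L_def)
  have p0: "0 \<le> r powr x" for x by simp
  show ?thesis
  proof (cases "K = k0 \<and> l \<le> l0")
    case True
    have "r powr (real K - real j) \<le> r powr (real k0 - real s)"
      using True js r by (intro powr_mono') auto
    moreover have "(L + 5)^l \<le> 2^n * L^l0"
    proof -
      have "(2*L)^l = 2^l * L^l" by (simp add: power_mult_distrib)
      also have "\<dots> \<le> 2^n * L^l0"
        using True ln L1 by (intro mult_mono power_increasing) auto
      finally show ?thesis using a by linarith
    qed
    ultimately have "r powr (real K - real j) * (L + 5)^l \<le> r powr (real k0 - real s) * (2^n * L^l0)"
      using L1 by (intro mult_mono) (auto simp: L_def)
    then show ?thesis by (simp add: L_def mult_ac)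
  next
    case False
    then have K: "K \<ge> k0 + 1" using cs by auto
    have "r powr (real K - real j) \<le> r powr (real k0 - real s + 1)"
      using K js r by (intro powr_mono') auto
    also have "\<dots> = r powr (real k0 - real s) * r" using r by (simp add: powr_add)
    finally have b: "r powr (real K - real j) \<le> r powr (real k0 - real s) * r" .
    have "(2*L)^l \<le> (2*L)^n" using ln L1 by (intro power_increasing) auto
    then have c: "(L + 5)^l \<le> (2*L)^n" using a by linarith
    have "r powr (real K - real j) * (L + 5)^l \<le> (r powr (real k0 - real s) * r) * (2*L)^n"
      using b c L1 r by (intro mult_mono) (auto simp: L_def)
    also have "\<dots> = r powr (real k0 - real s) * (r * (2*L)^n)" by (simp add: mult_ac)
    also have "\<dots> \<le> r powr (real k0 - real s) * 1"
      using sm by (intro mult_left_mono) (auto simp: L_def)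
    also have "\<dots> \<le> r powr (real k0 - real s) * (2^n * L^l0)"
    proof (intro mult_left_mono)
      have "1 * 1 \<le> (2::real)^n * L^l0"
        by (rule mult_mono) (use L1 in auto)
      then show "1 \<le> 2^n * L^l0" by simp
    qed simp
    finally show ?thesis by (simp add: L_def mult_ac)
  qed
qed

lemma small_r: "\<exists>\<rho>>0. \<forall>r::real. 0 < r \<and> r < \<rho> \<longrightarrow> r < 1 \<and> 5 \<le> ln (1/r) \<and> r * (2 * ln (1/r))^n \<le> 1"
proof -
  have t1: "((\<lambda>x::real. x^n / exp x) \<longlongrightarrow> 0) at_top" by (rule tendsto_power_div_exp_0)
  have f: "filterlim (\<lambda>r::real. ln (1/r)) at_top (at_right 0)" by real_asymp
  have t2: "((\<lambda>r. ln (1/r)^n / exp (ln (1/r))) \<longlongrightarrow> 0) (at_right (0::real))"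
    by (rule filterlim_compose[OF t1 f])
  have t3: "((\<lambda>r. 2^n * (ln (1/r)^n / exp (ln (1/r)))) \<longlongrightarrow> 2^n * 0) (at_right (0::real))"
    by (intro tendsto_intros t2)
  have ev: "eventually (\<lambda>r::real. 2^n * (ln (1/r)^n / exp (ln (1/r))) = r * (2 * ln (1/r))^n) (at_right 0)"
    by (auto simp: eventually_at_right_field power_mult_distrib intro!: exI[of _ 1])
  have t4: "((\<lambda>r. r * (2 * ln (1/r))^n) \<longlongrightarrow> 0) (at_right (0::real))"
    using Lim_transform_eventually[OF t3 ev] by simp
  have e3: "eventually (\<lambda>r::real. r * (2 * ln (1/r))^n < 1) (at_right 0)"
    using order_tendstoD(2)[OF t4, of 1] by simp
  have e1a: "eventually (\<lambda>r::real. r < 1) (at_right 0)"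
    by real_asymp
  have e1b: "eventually (\<lambda>r::real. 5 \<le> ln (1/r)) (at_right 0)"
    by real_asymp
  have e1: "eventually (\<lambda>r::real. r < 1 \<and> 5 \<le> ln (1/r)) (at_right 0)"
    using e1a e1b by eventually_elim auto
  have "eventually (\<lambda>r::real. r < 1 \<and> 5 \<le> ln (1/r) \<and> r * (2 * ln (1/r))^n \<le> 1) (at_right 0)"
    using e1 e3 by eventually_elim auto
  then show ?thesis by (subst (asm) eventually_at_right_field) auto
qed


lemma inv_nonpos: "v \<in> \<real>\<^sub>\<le>\<^sub>0 \<Longrightarrow> inverse (v::complex) \<in> \<real>\<^sub>\<le>\<^sub>0"
  by (auto simp: complex_nonpos_Reals_iff Re_inverse Im_inverse intro!: divide_nonpos_nonneg)

lemma inverse_nonpos: "w \<notin> \<real>\<^sub>\<le>\<^sub>0 \<Longrightarrow> inverse (w::complex) \<notin> \<real>\<^sub>\<le>\<^sub>0"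
  using inv_nonpos[of "inverse w"] by auto

lemma Akl_summable:
  assumes sa: "summable (\<lambda>k. norm (a k) * t^k)" and t: "0 \<le> t"
  shows "summable (\<lambda>k. norm (Akl N a k l $ i) * t^k)"
proof -
  define c where "c = cmod ((\<i> / (2 * complex_of_real pi)) ^ l / of_nat (fact l)) * (\<Sum>m\<in>UNIV. cmod (mpow N l $ i $ m))"
  have b: "norm (Akl N a k l $ i) \<le> c * norm (a k)" for k
  proof -
    have "norm ((mpow N l *v a k) $ i) \<le> (\<Sum>m\<in>UNIV. cmod (mpow N l $ i $ m) * norm (a k))"
      unfolding matvec_nth
      by (rule order_trans[OF norm_sum sum_mono])
         (auto simp: norm_mult intro!: mult_left_mono Finite_Cartesian_Product.norm_nth_le)
    then have "cmod ((\<i> / (2 * complex_of_real pi)) ^ l / of_nat (fact l)) * norm ((mpow N l *v a k) $ i)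
      \<le> cmod ((\<i> / (2 * complex_of_real pi)) ^ l / of_nat (fact l)) * (\<Sum>m\<in>UNIV. cmod (mpow N l $ i $ m) * norm (a k))"
      by (rule mult_left_mono) simp
    also have "\<dots> = c * norm (a k)" unfolding c_def sum_distrib_right[symmetric] by (simp only: mult.assoc)
    finally show ?thesis unfolding Akl_def vector_smult_component norm_mult .
  qed
  show ?thesis
  proof (rule summable_comparison_test[OF _ summable_mult[OF sa, of c]])
    show "\<exists>M0. \<forall>k\<ge>M0. norm (norm (Akl N a k l $ i) * t ^ k) \<le> c * (norm (a k) * t ^ k)"
      using b t by (auto simp: abs_mult mult.assoc[symmetric] intro!: mult_right_mono)
  qed
qed

lemma fin_comp:
  "(\<Sum>k<m. \<Sum>l\<le>n. fkl k l u *s Akl N a k l) $ i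
     = (\<Sum>l\<le>n. Ln (inverse u)^l * (\<Sum>k<m. Akl N a k l $ i * u^k))"
  by (simp add: fkl_def sum_distrib_left mult_ac) (rule sum.swap)

lemma Kf_iff:
  "degf n k l \<le> \<mu> \<longleftrightarrow> k < nat (\<lfloor>\<mu> + real l / real (n+1)\<rfloor> + 1)"
proof -
  have "degf n k l \<le> \<mu> \<longleftrightarrow> real k \<le> \<mu> + real l / real (n+1)"
    by (auto simp: degf_def)
  also have "\<dots> \<longleftrightarrow> int k \<le> \<lfloor>\<mu> + real l / real (n+1)\<rfloor>"
    by (simp add: le_floor_iff)
  also have "\<dots> \<longleftrightarrow> k < nat (\<lfloor>\<mu> + real l / real (n+1)\<rfloor> + 1)"
    by (simp add: zless_nat_eq_int_zless)
  finally show ?thesis .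
qed

lemma Kf_cases:
  assumes l0: "l0 \<le> n" and l: "l \<le> n"
    and minim: "\<forall>k' l'. l' \<le> n \<and> degf n k' l' > \<mu> \<longrightarrow> degf n k' l' \<ge> degf n k0 l0"
  shows "(nat (\<lfloor>\<mu> + real l / real (n+1)\<rfloor> + 1) = k0 \<and> l \<le> l0)
          \<or> nat (\<lfloor>\<mu> + real l / real (n+1)\<rfloor> + 1) \<ge> k0 + 1"
proof -
  define K where "K = nat (\<lfloor>\<mu> + real l / real (n+1)\<rfloor> + 1)"
  have "degf n K l > \<mu>" using Kf_iff[of n K l \<mu>] by (simp add: K_def)
  then have "degf n K l \<ge> degf n k0 l0" using minim l by blast
  then have "real k0 - real l0 / real (n+1) \<le> real K - real l / real (n+1)"
    by (simp add: degf_def)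
  then have "(real k0 - real l0 / real (n+1)) * real (n+1) \<le> (real K - real l / real (n+1)) * real (n+1)"
    by (rule mult_right_mono) simp
  then have "real k0 * real (n+1) - real l0 \<le> real K * real (n+1) - real l"
    by (simp only: left_diff_distrib) simp
  moreover have "real (k0*(n+1)+l) = real k0 * real (n+1) + real l"
    by (simp only: of_nat_add[of "k0*(n+1)" l] of_nat_mult)
  moreover have "real (K*(n+1)+l0) = real K * real (n+1) + real l0"
    by (simp only: of_nat_add[of "K*(n+1)" l0] of_nat_mult)
  ultimately have "real (k0 * (n+1) + l) \<le> real (K * (n+1) + l0)" by linarith
  then have ineq: "k0 * (n+1) + l \<le> K * (n+1) + l0" by linarith
  have "K \<ge> k0"
  proof (rule ccontr)
    assume "\<not> K \<ge> k0"
    then have "Suc K \<le> k0" by simp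
    then have "Suc K * (n+1) \<le> k0 * (n+1)" by (rule mult_le_mono1)
    then show False using ineq l0 by simp
  qed
  then show ?thesis using ineq unfolding K_def[symmetric] by (cases "K = k0") auto
qed

lemma sdisc_eq: "sdisc \<rho> = ball 0 \<rho> - \<real>\<^sub>\<le>\<^sub>0"
  by (auto simp: sdisc_def)

lemma open_sdisc: "open (sdisc \<rho>)"
  unfolding sdisc_eq by (intro open_Diff) auto


lemma part1_bound:
  fixes b :: "nat \<Rightarrow> nat \<Rightarrow> complex" and F :: "complex \<Rightarrow> complex"
  assumes sb: "\<And>l. l \<le> n \<Longrightarrow> summable (\<lambda>k. norm (b l k) * t^k)" and t: "0 < t"
    and z: "z \<notin> \<real>\<^sub>\<le>\<^sub>0" "norm z < 1" "5/4 * norm z < t"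
    and S: "open S" "z \<in> S" "\<And>w. w \<in> S \<Longrightarrow> F w = (\<Sum>l\<le>n. Ln (inverse w)^l * tl_ps (b l) m w)"
  shows "norm ((deriv^^j) F z) \<le> fact j * (4/norm z)^j * (\<Sum>l\<le>n. (ln (1/norm z) + 5)^l * tau (b l) t m)"
proof (rule core[where h="\<lambda>l. tl_ps (b l) m" and t=t, OF _ z _ S])
  fix l assume l: "l \<le> n"
  show "tl_ps (b l) m holomorphic_on ball 0 t" using tl_ps_holo[OF sb[OF l]] t by simp
  fix w assume w: "w \<in> cball z (norm z / 4)"
  have z0: "z \<noteq> 0" using z by auto
  have nw: "norm w \<le> t" using local_dom(2)[OF z0 w] z by simp
  have "norm (tl_ps (b l) m w) \<le> (norm w / t)^m * tau (b l) t m"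
    by (rule tl_ps_bound[OF sb[OF l] nw t])
  also have "\<dots> \<le> 1 * tau (b l) t m"
    using nw t tau_nonneg[OF sb[OF l], of m] by (intro mult_right_mono power_le_one) auto
  finally show "norm (tl_ps (b l) m w) \<le> tau (b l) t m" by simp
qed

lemma part2_bound:
  fixes b :: "nat \<Rightarrow> nat \<Rightarrow> complex" and F :: "complex \<Rightarrow> complex" and Kf :: "nat \<Rightarrow> nat"
  assumes sb: "\<And>l. l \<le> n \<Longrightarrow> summable (\<lambda>k. norm (b l k) * t^k)" and t: "0 < t"
    and z: "z \<notin> \<real>\<^sub>\<le>\<^sub>0" "norm z < 1" "5/4 * norm z < t"
       "5 \<le> ln (1 / norm z)" "norm z * (2 * ln (1 / norm z))^n \<le> 1"
    and S: "open S" "z \<in> S" "\<And>w. w \<in> S \<Longrightarrow> F w = (\<Sum>l\<le>n. Ln (inverse w)^l * tl_ps (b l) (Kf l) w)"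
    and cs: "\<And>l. l \<le> n \<Longrightarrow> (Kf l = k0 \<and> l \<le> l0) \<or> Kf l \<ge> k0 + 1"
    and js: "j \<le> s" and l0: "l0 \<le> n"
  shows "norm ((deriv^^j) F z) \<le> (fact j * 4^j * 2^n * (\<Sum>l\<le>n. (5/(4*t))^(Kf l) * tau (b l) t (Kf l)))
           * (norm z powr (real k0 - real s) * ln (1 / norm z)^l0)"
proof -
  define r where "r = norm z"
  have z0: "z \<noteq> 0" using z by auto
  have r: "0 < r" "r < 1" using z0 z by (auto simp: r_def)
  define L where "L = ln (1/r)"
  have tpos: "0 \<le> tau (b l) t K" if "l \<le> n" for l K using tau_nonneg[OF sb[OF that]] t by simp
  have c1: "norm ((deriv^^j) F z) \<le> fact j * (4/r)^j * (\<Sum>l\<le>n. (L + 5)^l * (((5/4*r)/t)^(Kf l) * tau (b l) t (Kf l)))"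
    unfolding r_def L_def
  proof (rule core[where h="\<lambda>l. tl_ps (b l) (Kf l)" and t=t, OF _ z(1-3) _ S])
    fix l assume l: "l \<le> n"
    show "tl_ps (b l) (Kf l) holomorphic_on ball 0 t" using tl_ps_holo[OF sb[OF l]] t by simp
    fix w assume w: "w \<in> cball z (norm z / 4)"
    have nw5: "norm w \<le> 5/4 * norm z" using local_dom(2)[OF z0 w] .
    have nw: "norm w \<le> t" using nw5 z by simp
    have "norm (tl_ps (b l) (Kf l) w) \<le> (norm w / t)^(Kf l) * tau (b l) t (Kf l)"
      by (rule tl_ps_bound[OF sb[OF l] nw t])
    also have "\<dots> \<le> ((5/4 * norm z) / t)^(Kf l) * tau (b l) t (Kf l)"
      using nw5 t tpos[OF l] by (intro mult_right_mono power_mono divide_right_mono) auto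
    finally show "norm (tl_ps (b l) (Kf l) w) \<le> ((5/4 * norm z) / t)^(Kf l) * tau (b l) t (Kf l)" .
  qed
  have eqt: "(4/r)^j * ((L + 5)^l * (((5/4*r)/t)^K * T))
           = (4^j * (5/(4*t))^K * T) * (r powr (real K - real j) * (L + 5)^l)" for l K T
  proof -
    have "r powr (real K - real j) = r^K / r^j" using r by (simp add: powr_diff powr_realpow)
    moreover have "((5/4*r)/t)^K = (5/(4*t))^K * r^K"
      by (simp add: power_mult_distrib[symmetric])
    ultimately show ?thesis using r t by (simp add: power_divide field_simps)
  qed
  have "(4/r)^j * (\<Sum>l\<le>n. (L + 5)^l * (((5/4*r)/t)^(Kf l) * tau (b l) t (Kf l)))
      = (\<Sum>l\<le>n. (4^j * (5/(4*t))^(Kf l) * tau (b l) t (Kf l)) * (r powr (real (Kf l) - real j) * (L + 5)^l))"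
    unfolding sum_distrib_left eqt ..
  also have "\<dots> \<le> (\<Sum>l\<le>n. (4^j * (5/(4*t))^(Kf l) * tau (b l) t (Kf l)) * (2^n * r powr (real k0 - real s) * L^l0))"
  proof (rule sum_mono, rule mult_left_mono)
    fix l assume "l \<in> {..n}"
    then have l: "l \<le> n" by simp
    show "r powr (real (Kf l) - real j) * (L + 5)^l \<le> 2^n * r powr (real k0 - real s) * L^l0"
      unfolding L_def
      by (rule key_ineq[OF r _ _ js l l0 cs[OF l]]) (use z in \<open>auto simp: r_def\<close>)
    show "0 \<le> 4^j * (5/(4*t))^(Kf l) * tau (b l) t (Kf l)" using t tpos[OF l] by simp
  qed
  also have "\<dots> = (4^j * 2^n * (\<Sum>l\<le>n. (5/(4*t))^(Kf l) * tau (b l) t (Kf l))) * (r powr (real k0 - real s) * L^l0)"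
    by (simp add: sum_distrib_right sum_distrib_left mult_ac)
  finally have c2: "(4/r)^j * (\<Sum>l\<le>n. (L + 5)^l * (((5/4*r)/t)^(Kf l) * tau (b l) t (Kf l)))
     \<le> (4^j * 2^n * (\<Sum>l\<le>n. (5/(4*t))^(Kf l) * tau (b l) t (Kf l))) * (r powr (real k0 - real s) * L^l0)" .
  have "norm ((deriv^^j) F z) \<le> fact j * ((4^j * 2^n * (\<Sum>l\<le>n. (5/(4*t))^(Kf l) * tau (b l) t (Kf l))) * (r powr (real k0 - real s) * L^l0))"
  proof -
    have c1': "norm ((deriv^^j) F z) \<le> fact j * ((4/r)^j * (\<Sum>l\<le>n. (L + 5)^l * (((5/4*r)/t)^(Kf l) * tau (b l) t (Kf l))))"
      using c1 by (simp only: mult.assoc)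
    have "fact j * ((4/r)^j * (\<Sum>l\<le>n. (L + 5)^l * (((5/4*r)/t)^(Kf l) * tau (b l) t (Kf l))))
       \<le> fact j * ((4^j * 2^n * (\<Sum>l\<le>n. (5/(4*t))^(Kf l) * tau (b l) t (Kf l))) * (r powr (real k0 - real s) * L^l0))"
      by (rule mult_left_mono[OF c2]) simp
    then show ?thesis using c1' by linarith
  qed
  then show ?thesis by (simp add: r_def L_def mult_ac)
qed


lemma get_t:
  assumes rad: "conv_radius a > 0"
  shows "\<exists>t>0. t < 1 \<and> summable (\<lambda>k. norm (a k) * t^k)"
proof -
  obtain t' :: ereal where t': "0 < t'" "t' < min 1 (conv_radius a)"
    using rad dense[of 0 "min 1 (conv_radius a)"] by auto
  define t where "t = real_of_ereal t'"
  have tt: "ereal t = t'" using t' by (cases t') (auto simp: t_def)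
  have "0 < t" "t < 1" using t' tt by auto
  moreover have "summable (\<lambda>k. norm (a k) * t^k)"
  proof (rule summable_in_conv_radius)
    show "ereal (norm t) < conv_radius (\<lambda>k. norm (a k))"
      using t' tt \<open>0 < t\<close> by auto
  qed
  ultimately show ?thesis by blast
qed

lemma Omega_ps:
  assumes nil: "mpow N (n+1) = 0" and sa: "summable (\<lambda>k. norm (a k) * t^k)" and u: "norm u \<le> t"
  shows "Omega N a u $ i = (\<Sum>l\<le>n. Ln (inverse u)^l * ps (\<lambda>k. Akl N a k l $ i) u)"
  unfolding Omega_def ps_def by (rule Omega_comp[OF nil sa u])


lemma norm_le_l1_cvec: "norm (x::complex^'d) \<le> (\<Sum>i\<in>UNIV. norm (x$i))"
  by (simp add: norm_vec_def L2_set_le_sum)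

theorem lemma7p2:
  fixes N :: "complex^'d^'d" and a :: "nat \<Rightarrow> complex^'d" and n :: nat
  assumes nil: "mpow N (n + 1) = 0"
    and rad: "conv_radius a > 0"
  shows "(\<exists>\<rho>>0. \<forall>s K. compact K \<and> K \<subseteq> sdisc \<rho> \<longrightarrow>
            uniform_limit K
              (\<lambda>m w. (vderiv ^^ s) (\<lambda>u. \<Sum>k<m. \<Sum>l\<le>n. fkl k l u *s Akl N a k l) w)
              ((vderiv ^^ s) (Omega N a)) sequentially)
       \<and> (\<forall>(\<mu>::real) (s::nat) (k0::nat) (l0::nat).
            l0 \<le> n \<and> degf n k0 l0 > \<mu>
            \<and> (\<forall>k' l'. l' \<le> n \<and> degf n k' l' > \<mu> \<longrightarrow> degf n k' l' \<ge> degf n k0 l0)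
            \<longrightarrow> (\<exists>C \<rho>. \<rho> > 0 \<and> (\<forall>z\<in>sdisc \<rho>.
                  Cs_norm s (\<lambda>u. Omega N a u
                     - (\<Sum>(k, l)\<in>{(k, l). l \<le> n \<and> degf n k l \<le> \<mu>}. fkl k l u *s Akl N a k l)) z
                  \<le> C * cmod z powr (real k0 - real s) * (ln (1 / cmod z)) ^ l0)))"
proof -
  obtain t where t: "0 < t" "t < 1" and sa: "summable (\<lambda>k. norm (a k) * t^k)"
    using get_t[OF rad] by blast
  define \<rho>0 where "\<rho>0 = t/2"
  have \<rho>0: "0 < \<rho>0" using t by (simp add: \<rho>0_def)
  define \<beta> where "\<beta> = (\<lambda>i l k. Akl N a k l $ i)"
  have sb: "\<And>i l. summable (\<lambda>k. norm (\<beta> i l k) * t^k)"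
    unfolding \<beta>_def by (rule Akl_summable[OF sa]) (use t in auto)
  have dom: "w \<notin> \<real>\<^sub>\<le>\<^sub>0 \<and> norm w < 1 \<and> 5/4 * norm w < t \<and> norm w \<le> t" if "w \<in> sdisc \<rho>0" for w
    using t that by (auto simp: sdisc_def \<rho>0_def)
  have Om: "Omega N a w $ i = (\<Sum>l\<le>n. Ln (inverse w)^l * ps (\<beta> i l) w)" if "w \<in> sdisc \<rho>0" for w i
    using Omega_ps[OF nil sa, of w i] dom[OF that] by (simp add: \<beta>_def)
  have holL: "(\<lambda>w. Ln (inverse w)) holomorphic_on sdisc \<rho>0"
    by (intro holomorphic_intros) (auto simp: sdisc_def inverse_nonpos)
  have holps: "ps (\<beta> i l) holomorphic_on sdisc \<rho>0" for i l
    by (rule holomorphic_on_subset[OF ps_holo[OF sb]]) (use t in \<open>auto simp: sdisc_def \<rho>0_def\<close>)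
  have hol\<Omega>: "(\<lambda>w. Omega N a w $ i) holomorphic_on sdisc \<rho>0" for i
  proof (rule holomorphic_transform[where f="\<lambda>w. \<Sum>l\<le>n. Ln (inverse w)^l * ps (\<beta> i l) w"])
    show "(\<lambda>w. \<Sum>l\<le>n. Ln (inverse w)^l * ps (\<beta> i l) w) holomorphic_on sdisc \<rho>0"
      by (intro holomorphic_on_sum holomorphic_on_mult holomorphic_on_power holL holps)
  qed (simp add: Om)
  have P1: "\<forall>s K. compact K \<and> K \<subseteq> sdisc \<rho>0 \<longrightarrow>
            uniform_limit K
              (\<lambda>m w. (vderiv ^^ s) (\<lambda>u. \<Sum>k<m. \<Sum>l\<le>n. fkl k l u *s Akl N a k l) w)
              ((vderiv ^^ s) (Omega N a)) sequentially"
  proof (intro allI impI)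
    fix s and K :: "complex set" assume K: "compact K \<and> K \<subseteq> sdisc \<rho>0"
    define P where "P = (\<lambda>m u. \<Sum>k<m. \<Sum>l\<le>n. fkl k l u *s Akl N a k l)"
    have Pc: "P m u $ i = (\<Sum>l\<le>n. Ln (inverse u)^l * (\<Sum>k<m. \<beta> i l k * u^k))" for m u i
      unfolding P_def \<beta>_def by (rule fin_comp)
    have holP: "(\<lambda>w. P m w $ i) holomorphic_on sdisc \<rho>0" for m i
      unfolding Pc
      by (intro holomorphic_on_sum holomorphic_on_mult holomorphic_on_power holL
                holomorphic_on_const holomorphic_on_ident)
    have Fm: "Omega N a w $ i - P m w $ i = (\<Sum>l\<le>n. Ln (inverse w)^l * tl_ps (\<beta> i l) m w)"
      if "w \<in> sdisc \<rho>0" for m i w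
      by (simp add: Om[OF that] Pc tl_ps_def sum_subtractf right_diff_distrib)
    have "uniform_limit K (\<lambda>m w. (vderiv ^^ s) (P m) w) ((vderiv ^^ s) (Omega N a)) sequentially"
    proof (cases "K = {}")
      case True then show ?thesis by (auto intro!: uniform_limitI)
    next
      case False
      obtain zm where zm: "zm \<in> K" "\<And>z. z \<in> K \<Longrightarrow> norm zm \<le> norm z"
        using continuous_attains_inf[OF K[THEN conjunct1] False continuous_on_norm_id] by blast
      define \<delta> where "\<delta> = norm zm"
      have \<delta>: "0 < \<delta>" using zm(1) K by (auto simp: \<delta>_def sdisc_def)
      define E where "E m = (\<Sum>i\<in>UNIV. fact s * (4/\<delta>)^s * (\<Sum>l\<le>n. (ln (1/\<delta>) + 5)^l * tau (\<beta> i l) t m))" for m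
      have E0: "E \<longlonglongrightarrow> 0"
      proof -
        have "E \<longlonglongrightarrow> (\<Sum>i\<in>UNIV. fact s * (4/\<delta>)^s * (\<Sum>l\<le>n. (ln (1/\<delta>) + 5)^l * 0))"
          unfolding E_def by (auto intro!: tendsto_eq_intros tau_lim[OF sb])
        then show ?thesis by simp
      qed
      have bnd: "dist ((vderiv^^s) (P m) z) ((vderiv^^s) (Omega N a) z) \<le> E m" if z: "z \<in> K" for m z
      proof -
        have zs: "z \<in> sdisc \<rho>0" using z K by auto
        have dz: "z \<notin> \<real>\<^sub>\<le>\<^sub>0" "norm z < 1" "5/4*norm z < t" using dom[OF zs] by auto
        have r: "\<delta> \<le> norm z" using zm(2)[OF z] by (simp add: \<delta>_def)
        have comp: "norm (((vderiv^^s) (P m) z - (vderiv^^s) (Omega N a) z) $ i)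
             \<le> fact s * (4/\<delta>)^s * (\<Sum>l\<le>n. (ln (1/\<delta>) + 5)^l * tau (\<beta> i l) t m)" for i
        proof -
          have zp: "0 < norm z" using r \<delta> by linarith
          have lpos: "0 \<le> ln (1 / norm z) + 5" using ln_le_minus_one[OF zp] dz(2) zp by (simp add: ln_div)
          have mono: "fact s * (4/norm z)^s * (\<Sum>l\<le>n. (ln (1/norm z) + 5)^l * tau (\<beta> i l) t m)
             \<le> fact s * (4/\<delta>)^s * (\<Sum>l\<le>n. (ln (1/\<delta>) + 5)^l * tau (\<beta> i l) t m)"
          proof (intro mult_left_mono mult_mono sum_mono power_mono mult_right_mono)
            show "4 / norm z \<le> 4 / \<delta>" using r \<delta> mult_pos_pos[OF zp \<delta>] by (intro divide_left_mono) auto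
            show "ln (1 / norm z) + 5 \<le> ln (1 / \<delta>) + 5" using r \<delta> zp by (simp add: ln_div)
            fix l
            show "0 \<le> ln (1 / norm z) + 5" by (rule lpos)
            show "0 \<le> tau (\<beta> i l) t m" using tau_nonneg[OF sb] t by simp
          qed (use r \<delta> dz t tau_nonneg[OF sb] lpos in \<open>auto intro!: sum_nonneg mult_nonneg_nonneg\<close>)
          have "((vderiv^^s) (P m) z - (vderiv^^s) (Omega N a) z) $ i
              = - (deriv^^s) (\<lambda>w. Omega N a w $ i - P m w $ i) z"
            by (simp add: vderiv_pow_nth higher_deriv_diff[OF hol\<Omega> holP open_sdisc zs])
          then have "norm (((vderiv^^s) (P m) z - (vderiv^^s) (Omega N a) z) $ i)
              = norm ((deriv^^s) (\<lambda>w. Omega N a w $ i - P m w $ i) z)" by simp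
          also have "\<dots> \<le> fact s * (4/norm z)^s * (\<Sum>l\<le>n. (ln (1/norm z) + 5)^l * tau (\<beta> i l) t m)"
            by (rule part1_bound[OF sb t(1) dz open_sdisc zs Fm])
          also note mono
          finally show ?thesis .
        qed
        have "dist ((vderiv^^s) (P m) z) ((vderiv^^s) (Omega N a) z)
             \<le> (\<Sum>i\<in>UNIV. norm (((vderiv^^s) (P m) z - (vderiv^^s) (Omega N a) z) $ i))"
          unfolding dist_norm by (rule norm_le_l1_cvec)
        also have "\<dots> \<le> E m" unfolding E_def by (intro sum_mono comp)
        finally show ?thesis .
      qed
      show ?thesis
      proof (rule uniform_limitI)
        fix e :: real assume e: "0 < e"
        have "eventually (\<lambda>m. E m < e) sequentially" using order_tendstoD(2)[OF E0 e] .
        then show "\<forall>\<^sub>F m in sequentially. \<forall>z\<in>K. dist ((vderiv^^s) (P m) z) ((vderiv^^s) (Omega N a) z) < e"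
          by eventually_elim (use bnd in \<open>auto intro: le_less_trans\<close>)
      qed
    qed
    then show "uniform_limit K
              (\<lambda>m w. (vderiv ^^ s) (\<lambda>u. \<Sum>k<m. \<Sum>l\<le>n. fkl k l u *s Akl N a k l) w)
              ((vderiv ^^ s) (Omega N a)) sequentially"
      unfolding P_def .
  qed
  have P2: "\<forall>(\<mu>::real) (s::nat) (k0::nat) (l0::nat).
            l0 \<le> n \<and> degf n k0 l0 > \<mu>
            \<and> (\<forall>k' l'. l' \<le> n \<and> degf n k' l' > \<mu> \<longrightarrow> degf n k' l' \<ge> degf n k0 l0)
            \<longrightarrow> (\<exists>C \<rho>. \<rho> > 0 \<and> (\<forall>z\<in>sdisc \<rho>.
                  Cs_norm s (\<lambda>u. Omega N a u
                     - (\<Sum>(k, l)\<in>{(k, l). l \<le> n \<and> degf n k l \<le> \<mu>}. fkl k l u *s Akl N a k l)) z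
                  \<le> C * cmod z powr (real k0 - real s) * (ln (1 / cmod z)) ^ l0))"
  proof (intro allI impI)
    fix \<mu> :: real and s k0 l0 :: nat
    assume H: "l0 \<le> n \<and> degf n k0 l0 > \<mu>
            \<and> (\<forall>k' l'. l' \<le> n \<and> degf n k' l' > \<mu> \<longrightarrow> degf n k' l' \<ge> degf n k0 l0)"
    define Kf where "Kf l = nat (\<lfloor>\<mu> + real l / real (n+1)\<rfloor> + 1)" for l
    have cs: "(Kf l = k0 \<and> l \<le> l0) \<or> Kf l \<ge> k0 + 1" if "l \<le> n" for l
      unfolding Kf_def using Kf_cases[of l0 n l \<mu> k0] H that by blast
    obtain \<rho>1 where \<rho>1: "\<rho>1 > 0"
      "\<And>r::real. 0 < r \<and> r < \<rho>1 \<Longrightarrow> r < 1 \<and> 5 \<le> ln (1/r) \<and> r * (2 * ln (1/r))^n \<le> 1"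
      using small_r[of n] by blast
    define \<rho>2 where "\<rho>2 = min \<rho>0 \<rho>1"
    define S\<mu> where "S\<mu> = {(k, l). l \<le> n \<and> degf n k l \<le> \<mu>}"
    define R where "R = (\<lambda>u. Omega N a u - (\<Sum>(k, l)\<in>S\<mu>. fkl k l u *s Akl N a k l))"
    have Sset: "S\<mu> = (\<lambda>(l,k). (k,l)) ` (SIGMA l:{..n}. {..<Kf l})"
      unfolding S\<mu>_def Kf_def using Kf_iff by (auto simp: image_iff)
    have Ssum: "(\<Sum>(k,l)\<in>S\<mu>. g k l) = (\<Sum>l\<le>n. \<Sum>k<Kf l. g k l)" for g :: "nat \<Rightarrow> nat \<Rightarrow> complex"
    proof -
      have inj: "inj_on (\<lambda>(l,k). (k,l)) (SIGMA l:{..n}. {..<Kf l})" by (auto simp: inj_on_def)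
      show ?thesis unfolding Sset sum.reindex[OF inj]
        by (simp add: sum.Sigma split_def)
    qed
    have Rc: "R w $ i = (\<Sum>l\<le>n. Ln (inverse w)^l * tl_ps (\<beta> i l) (Kf l) w)" if w: "w \<in> sdisc \<rho>0" for w i
    proof -
      have "(\<Sum>(k, l)\<in>S\<mu>. fkl k l w *s Akl N a k l) $ i = (\<Sum>(k, l)\<in>S\<mu>. fkl k l w * \<beta> i l k)"
        by (simp add: split_def \<beta>_def)
      also have "\<dots> = (\<Sum>l\<le>n. \<Sum>k<Kf l. fkl k l w * \<beta> i l k)" by (rule Ssum)
      also have "\<dots> = (\<Sum>l\<le>n. Ln (inverse w)^l * (\<Sum>k<Kf l. \<beta> i l k * w^k))"
        by (simp add: fkl_def sum_distrib_left mult_ac)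
      finally show ?thesis
        by (simp add: R_def Om[OF w] tl_ps_def sum_subtractf right_diff_distrib)
    qed
    define C where "C = (\<Sum>j\<le>s. \<Sum>i\<in>UNIV. fact j * 4^j * 2^n * (\<Sum>l\<le>n. (5/(4*t))^(Kf l) * tau (\<beta> i l) t (Kf l)))"
    have pos2: "\<rho>2 > 0" using \<rho>0 \<rho>1 by (simp add: \<rho>2_def)
    have bnd2: "Cs_norm s R z \<le> C * cmod z powr (real k0 - real s) * (ln (1 / cmod z)) ^ l0"
      if z: "z \<in> sdisc \<rho>2" for z
    proof -
      have zs: "z \<in> sdisc \<rho>0" using z by (auto simp: sdisc_def \<rho>2_def)
      have z1: "norm z < \<rho>1" "0 < norm z" using z by (auto simp: sdisc_def \<rho>2_def)
      have zc: "5 \<le> ln (1 / norm z)" "norm z * (2 * ln (1 / norm z))^n \<le> 1"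
        using \<rho>1(2)[of "norm z"] z1 by auto
      have dz: "z \<notin> \<real>\<^sub>\<le>\<^sub>0" "norm z < 1" "5/4*norm z < t" using dom[OF zs] by auto
      have "Cs_norm s R z \<le> (\<Sum>j\<le>s. \<Sum>i\<in>UNIV. norm ((deriv^^j) (\<lambda>w. R w $ i) z))"
        unfolding Cs_norm_def
      proof (intro sum_mono)
        fix j
        show "norm ((vderiv^^j) R z) \<le> (\<Sum>i\<in>UNIV. norm ((deriv^^j) (\<lambda>w. R w $ i) z))"
          using norm_le_l1_cvec[of "(vderiv^^j) R z"] by (simp only: vderiv_pow_nth)
      qed
      also have "\<dots> \<le> (\<Sum>j\<le>s. \<Sum>i\<in>UNIV. (fact j * 4^j * 2^n * (\<Sum>l\<le>n. (5/(4*t))^(Kf l) * tau (\<beta> i l) t (Kf l)))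
           * (norm z powr (real k0 - real s) * ln (1 / norm z)^l0))"
      proof (intro sum_mono)
        fix j i assume j: "j \<in> {..s}"
        show "norm ((deriv^^j) (\<lambda>w. R w $ i) z) \<le> (fact j * 4^j * 2^n * (\<Sum>l\<le>n. (5/(4*t))^(Kf l) * tau (\<beta> i l) t (Kf l)))
           * (norm z powr (real k0 - real s) * ln (1 / norm z)^l0)"
          by (rule part2_bound[OF sb t(1) dz zc open_sdisc zs Rc cs]) (use j H in auto)
      qed
      also have "\<dots> = C * (cmod z powr (real k0 - real s) * (ln (1 / cmod z)) ^ l0)"
        unfolding C_def sum_distrib_right ..
      also have "\<dots> = C * cmod z powr (real k0 - real s) * (ln (1 / cmod z)) ^ l0"
        by (simp only: mult.assoc)
      finally show ?thesis .
    qed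
    note bnd2' = bnd2[unfolded R_def S\<mu>_def]
    show "\<exists>C \<rho>. \<rho> > 0 \<and> (\<forall>z\<in>sdisc \<rho>.
                  Cs_norm s (\<lambda>u. Omega N a u
                     - (\<Sum>(k, l)\<in>{(k, l). l \<le> n \<and> degf n k l \<le> \<mu>}. fkl k l u *s Akl N a k l)) z
                  \<le> C * cmod z powr (real k0 - real s) * (ln (1 / cmod z)) ^ l0)"
      by (intro exI[of _ C] exI[of _ \<rho>2] conjI ballI pos2 bnd2')
  qed
  show ?thesis
    by (intro conjI P2 exI[of _ \<rho>0] \<rho>0 P1)
qed

end
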